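(* Let $\lambda$ be an infinite cardinal and $\theta$ an infinite regular cardinal. (1) If $\theta=\mathrm{cf}(\lambda)<\lambda$, then $m(\theta,\lambda)>\lambda$; (2) if $\theta<\lambda$, then $m(\theta,\lambda)\ge\lambda$; (3) if $\theta<\lambda<\theta^{+\theta}$, then $m(\theta,\lambda)=\lambda$.
   Context: $m(\theta,\lambda)$ is the least size of a family $\mathcal Y\subseteq[\lambda]^\theta$ such that for every $X\in[\lambda]^\theta$ there is $Y\in\mathcal Y$ with $|X\cap Y|=\theta$. *)

theory Defs
  imports Main
begin

unbundle cardinal_syntax

text \<open>Cardinals are represented by sets and compared with the library's
  cardinal orders: the cardinal of a set A is card_of A, compared via
  ordLeq, ordLess, ordIso.  The cardinal lambda is represented by a set L,
  the cardinal theta by a set T.\<close>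

definition subsets_of_size :: "'b set \<Rightarrow> 'a set \<Rightarrow> 'a set set" where
  "subsets_of_size T A = {X. X \<subseteq> A \<and> card_of X =o card_of T}"

text \<open>The families whose least size is m(theta,lambda).\<close>
definition m_family :: "'b set \<Rightarrow> 'a set \<Rightarrow> 'a set set \<Rightarrow> bool" where
  "m_family T L Ys \<longleftrightarrow> Ys \<subseteq> subsets_of_size T L \<and>
     (\<forall>X \<in> subsets_of_size T L. \<exists>Y \<in> Ys. card_of (X \<inter> Y) =o card_of T)"

text \<open>m(theta,lambda) > kappa, m(theta,lambda) >= kappa, m(theta,lambda) <= kappa,
  with kappa = card_of K (m is the least size of an m_family).\<close>
definition m_greater :: "'b set \<Rightarrow> 'a set \<Rightarrow> 'c set \<Rightarrow> bool" where
  "m_greater T L K \<longleftrightarrow> (\<forall>Ys. m_family T L Ys \<longrightarrow> card_of K <o card_of Ys)"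

definition m_geq :: "'b set \<Rightarrow> 'a set \<Rightarrow> 'c set \<Rightarrow> bool" where
  "m_geq T L K \<longleftrightarrow> (\<forall>Ys. m_family T L Ys \<longrightarrow> card_of K \<le>o card_of Ys)"

definition m_leq :: "'b set \<Rightarrow> 'a set \<Rightarrow> 'c set \<Rightarrow> bool" where
  "m_leq T L K \<longleftrightarrow> (\<exists>Ys. m_family T L Ys \<and> card_of Ys \<le>o card_of K)"

text \<open>cf(lambda) = theta: the least size of a cofinal subset of L, where L is
  well-ordered by its initial (cardinal) well-order card_of L.\<close>
definition cf_is :: "'b set \<Rightarrow> 'a set \<Rightarrow> bool" where
  "cf_is T L \<longleftrightarrow> (\<exists>K \<subseteq> L. cofinal K (card_of L) \<and> card_of K =o card_of T) \<and>
     (\<forall>K \<subseteq> L. cofinal K (card_of L) \<longrightarrow> card_of T \<le>o card_of K)"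

text \<open>lambda < theta^{+theta} (used for infinite theta < lambda): there are
  fewer than theta cardinals mu with theta <= mu < lambda, i.e. there is no
  T-indexed family of subsets of L with pairwise distinct cardinalities all
  lying in the interval [theta, lambda).\<close>
definition below_plus_theta :: "'b set \<Rightarrow> 'a set \<Rightarrow> bool" where
  "below_plus_theta T L \<longleftrightarrow> \<not> (\<exists>A :: 'b \<Rightarrow> 'a set.
      (\<forall>t \<in> T. A t \<subseteq> L \<and> card_of T \<le>o card_of (A t) \<and> card_of (A t) <o card_of L) \<and>
      (\<forall>s \<in> T. \<forall>t \<in> T. s \<noteq> t \<longrightarrow> \<not> (card_of (A s) =o card_of (A t))))"

end

theory Submission
  imports Defs
begin

lemma cwo_wo: "wo_rel |A|"
  using card_of_Well_order wo_rel_def by blast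

lemma cwo_total: "a \<in> A \<Longrightarrow> b \<in> A \<Longrightarrow> (a,b) \<in> |A| \<or> (b,a) \<in> |A|"
  using wo_rel.TOTALS[OF cwo_wo[of A]] by (simp add: Field_card_of)

lemma cwo_antisym: "(a,b) \<in> |A| \<Longrightarrow> (b,a) \<in> |A| \<Longrightarrow> a = b"
  using wo_rel.ANTISYM[OF cwo_wo[of A]] unfolding antisym_def by blast

lemma cwo_trans: "(a,b) \<in> |A| \<Longrightarrow> (b,c) \<in> |A| \<Longrightarrow> (a,c) \<in> |A|"
  using wo_rel.TRANS[OF cwo_wo[of A]] unfolding trans_def by blast

lemma cwo_field: "(a,b) \<in> |A| \<Longrightarrow> a \<in> A \<and> b \<in> A"
  using Field_card_of[of A] unfolding Field_def by blast

lemma cwo_refl: "a \<in> A \<Longrightarrow> (a,a) \<in> |A|"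
  using wo_rel.REFL[OF cwo_wo[of A]] Field_card_of[of A] unfolding refl_on_def by blast

lemma underS_sub: "underS |A| a \<subseteq> A"
  unfolding underS_def by (auto dest: cwo_field)

lemma under_sub: "under |A| a \<subseteq> A"
  unfolding under_def by (auto dest: cwo_field)

lemma underS_small: "a \<in> A \<Longrightarrow> |underS |A| a| <o |A|"
  using card_of_underS[OF card_of_Card_order, of a A] by (simp add: Field_card_of)

lemma insert_small:
  assumes "infinite B" "|S| <o |B|" shows "|insert x S| <o |B|"
proof -
  have "|{x}| <o |B|" using finite_ordLess_infinite[OF card_of_Well_order card_of_Well_order, of "{x}" B] assms
    by (simp add: Field_card_of)
  then have "|{x} \<union> S| <o |B|" using card_of_Un_ordLess_infinite assms by blast
  then show ?thesis by simp
qed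

lemma under_small: assumes "infinite A" "a \<in> A" shows "|under |A| a| <o |A|"
proof -
  have "under |A| a = insert a (underS |A| a)"
    using cwo_refl[OF assms(2)] unfolding under_def underS_def by blast
  then show ?thesis using insert_small[OF assms(1) underS_small[OF assms(2)]] by simp
qed

lemma underS_mono: assumes "(a,x) \<in> |A|" shows "underS |A| a \<subseteq> underS |A| x"
proof
  fix y assume "y \<in> underS |A| a"
  then have y: "y \<noteq> a" "(y,a) \<in> |A|" unfolding underS_def by auto
  have "(y,x) \<in> |A|" using cwo_trans[OF y(2) assms] .
  moreover have "y \<noteq> x" using y assms cwo_antisym by metis
  ultimately show "y \<in> underS |A| x" unfolding underS_def by auto
qed

lemma union_small:
  assumes "infinite T" "|I| <o |L|" "|T| <o |L|" "\<forall>i\<in>I. |B i| \<le>o |T|"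
  shows "|\<Union>i\<in>I. B i| <o |L|"
proof (cases "|I| \<le>o |T|")
  case True
  then have "|\<Union>i\<in>I. B i| \<le>o |T|" using card_of_UNION_ordLeq_infinite[OF assms(1) True assms(4)] by simp
  then show ?thesis using ordLeq_ordLess_trans[OF _ assms(3)] by blast
next
  case False
  then have 1: "|T| \<le>o |I|" using not_ordLeq_iff_ordLess[OF card_of_Well_order card_of_Well_order] ordLess_imp_ordLeq by blast
  then have "infinite I" using assms(1) card_of_ordLeq_finite by blast
  moreover have "\<forall>i\<in>I. |B i| \<le>o |I|" using assms(4) 1 ordLeq_transitive by metis
  ultimately have "|\<Union>i\<in>I. B i| \<le>o |I|" using card_of_UNION_ordLeq_infinite[OF _ ordLeq_reflexive[OF card_of_Well_order]] by blast
  then show ?thesis using ordLeq_ordLess_trans[OF _ assms(2)] by blast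
qed

lemma exists_subset:
  assumes "|T| \<le>o |S|" shows "\<exists>X. X \<subseteq> S \<and> |X| =o |T|"
proof -
  obtain f where f: "inj_on f T" "f ` T \<subseteq> S" using card_of_ordLeq[of T S, THEN iffD2, OF assms] by blast
  have "bij_betw f T (f ` T)" using f(1) by (simp add: bij_betw_def)
  then have "|T| =o |f ` T|" by (rule card_of_ordIsoI)
  then have "|f ` T| =o |T|" by (rule ordIso_symmetric)
  then show ?thesis using f(2) by blast
qed

lemma nle_less: "\<not> |A| \<le>o |B| \<Longrightarrow> |B| <o |A|"
  by (rule not_ordLeq_iff_ordLess[OF card_of_Well_order card_of_Well_order, THEN iffD1])

lemma nless_le: "\<not> |A| <o |B| \<Longrightarrow> |B| \<le>o |A|"
  by (rule not_ordLess_iff_ordLeq[OF card_of_Well_order card_of_Well_order, THEN iffD1])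

lemma iso_le: "|A| =o |B| \<Longrightarrow> |A| \<le>o |B|"
  by (simp add: ordIso_iff_ordLeq)

lemma iso_ge: "|A| =o |B| \<Longrightarrow> |B| \<le>o |A|"
  by (simp add: ordIso_iff_ordLeq)

lemma empty_not_T: assumes "infinite T" "S = {}" shows "\<not> ( |S| =o |T| )"
proof
  assume "|S| =o |T|"
  then have "finite T" using card_of_ordIso_finite[of S T] assms(2) by simp
  then show False using assms by simp
qed

lemma part2:
  assumes "infinite L" "infinite T" "|T| <o |L|"
  shows "m_geq T L L"
  unfolding m_geq_def
proof (intro allI impI)
  fix Ys assume fam: "m_family T L Ys"
  show "|L| \<le>o |Ys|"
  proof (rule ccontr)
    assume "\<not> |L| \<le>o |Ys|"
    then have ys: "|Ys| <o |L|" by (rule nle_less)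
    have "\<forall>Y\<in>Ys. |Y| \<le>o |T|"
      using fam iso_le unfolding m_family_def subsets_of_size_def by blast
    then have U: "|\<Union>Y\<in>Ys. Y| <o |L|" using union_small[OF assms(2) ys assms(3), of "\<lambda>Y. Y"] by simp
    have TU: "|T| \<le>o |L - \<Union>Ys|"
    proof (rule ccontr)
      assume "\<not> |T| \<le>o |L - \<Union>Ys|"
      then have "|L - \<Union>Ys| <o |T|" by (rule nle_less)
      then have "|L - \<Union>Ys| <o |L|" using ordLess_transitive[OF _ assms(3)] by blast
      moreover have "|\<Union>Ys| <o |L|" using U by simp
      ultimately have "|(L - \<Union>Ys) \<union> \<Union>Ys| <o |L|" by (rule card_of_Un_ordLess_infinite[OF assms(1)])
      moreover have "|L| \<le>o |(L - \<Union>Ys) \<union> \<Union>Ys|" by (rule card_of_mono1) blast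
      ultimately have "|L| <o |L|" by (metis ordLeq_ordLess_trans)
      then show False using ordLess_irreflexive by blast
    qed
    then obtain X where X: "X \<subseteq> L - \<Union>Ys" "|X| =o |T|" using exists_subset[OF TU] by blast
    then have "X \<in> subsets_of_size T L" unfolding subsets_of_size_def by blast
    then obtain Y where "Y \<in> Ys" "|X \<inter> Y| =o |T|" using fam unfolding m_family_def by blast
    moreover have "X \<inter> Y = {}" using X \<open>Y \<in> Ys\<close> by blast
    ultimately show False using empty_not_T[OF assms(2)] by blast
  qed
qed

lemma not_cofinal_bound:
  assumes "S \<subseteq> L" "\<not> cofinal S |L|"
  shows "\<exists>a\<in>L. \<forall>b\<in>S. (b,a) \<in> |L|"
proof -
  obtain a where a: "a \<in> L" "\<forall>b\<in>S. a = b \<or> (a,b) \<notin> |L|"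
    using assms(2) unfolding cofinal_def Field_card_of by blast
  have "\<forall>b\<in>S. (b,a) \<in> |L|"
  proof
    fix b assume b: "b \<in> S"
    then have "a = b \<or> (a,b) \<notin> |L|" using a(2) by blast
    moreover have "(a,b) \<in> |L| \<or> (b,a) \<in> |L|" using cwo_total[OF a(1)] b assms(1) by blast
    ultimately show "(b,a) \<in> |L|" using cwo_refl[OF a(1)] by blast
  qed
  then show ?thesis using a by blast
qed

lemma part1:
  assumes "infinite L" "infinite T" "|T| <o |L|" "cf_is T L"
  shows "m_greater T L L"
  unfolding m_greater_def
proof (intro allI impI)
  fix Ys assume fam: "m_family T L Ys"
  show "|L| <o |Ys|"
  proof (rule ccontr)
    assume "\<not> |L| <o |Ys|"
    then have ys: "|Ys| \<le>o |L|" by (rule nless_le)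
    have TL: "|T| \<le>o |L|" by (rule ordLess_imp_ordLeq[OF assms(3)])
    obtain K where K: "K \<subseteq> L" "cofinal K |L|" "|K| =o |T|"
      using assms(4) unfolding cf_is_def by blast
    have cfmin: "\<And>S. S \<subseteq> L \<Longrightarrow> cofinal S |L| \<Longrightarrow> |T| \<le>o |S|"
      using assms(4) unfolding cf_is_def by blast
    obtain h where h: "bij_betw h T K" using card_of_ordIso[THEN iffD2, OF ordIso_symmetric[OF K(3)]] by blast
    define f where "f t = (SOME a. a \<in> L \<and> (\<forall>b\<in>h ` underS |T| t. (b,a) \<in> |L| ))" for t
    have f: "f t \<in> L \<and> (\<forall>b\<in>h ` underS |T| t. (b, f t) \<in> |L| )" if "t \<in> T" for t
    proof -
      have "|h ` underS |T| t| <o |T|"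
        by (rule ordLeq_ordLess_trans[OF card_of_image underS_small[OF that]])
      then have "\<not> |T| \<le>o |h ` underS |T| t|" by (metis not_ordLess_ordLeq)
      moreover have sub: "h ` underS |T| t \<subseteq> L"
      proof -
        have "h ` underS |T| t \<subseteq> h ` T" by (rule image_mono[OF underS_sub])
        also have "h ` T = K" using h by (simp add: bij_betw_def)
        finally show ?thesis using K(1) by blast
      qed
      ultimately have nc: "\<not> cofinal (h ` underS |T| t) |L|" using cfmin by blast
      then have "\<exists>a. a \<in> L \<and> (\<forall>b\<in>h ` underS |T| t. (b,a) \<in> |L| )"
        using not_cofinal_bound[OF sub nc] by blast
      then show ?thesis unfolding f_def by (rule someI_ex)
    qed
    define D where "D t = underS |L| (f t)" for t
    have Dsmall: "|D t| <o |L|" if "t \<in> T" for t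
      unfolding D_def by (rule underS_small[OF conjunct1[OF f[OF that]]])
    have Dbig: "\<exists>t0\<in>T. \<forall>t\<in>T. t \<notin> under |T| t0 \<longrightarrow> \<alpha> \<in> D t" if "\<alpha> \<in> L" for \<alpha>
    proof -
      have "\<exists>b\<in>K. \<alpha> \<noteq> b \<and> (\<alpha>,b) \<in> |L|" using K(2) that by (simp add: cofinal_def Field_card_of)
      then obtain k where k: "k \<in> K" "\<alpha> \<noteq> k" "(\<alpha>,k) \<in> |L|" by blast
      obtain t0 where t0: "t0 \<in> T" "h t0 = k" using h k(1) unfolding bij_betw_def by blast
      have "\<alpha> \<in> D t" if t: "t \<in> T" "t \<notin> under |T| t0" for t
      proof -
        have "(t0, t) \<in> |T|" using cwo_total[OF t0(1) t(1)] t(2) unfolding under_def by blast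
        moreover have "t0 \<noteq> t" using t(2) cwo_refl[OF t(1)] unfolding under_def by blast
        ultimately have "t0 \<in> underS |T| t" unfolding underS_def by blast
        then have kf: "(k, f t) \<in> |L|" using f[OF t(1)] t0 by blast
        then have "(\<alpha>, f t) \<in> |L|" using cwo_trans[OF k(3)] by blast
        moreover have "\<alpha> \<noteq> f t" using kf k cwo_antisym by metis
        ultimately show ?thesis unfolding D_def underS_def by blast
      qed
      then show ?thesis using t0 by blast
    qed
    obtain X where X: "X \<in> subsets_of_size T L" "\<forall>Y\<in>Ys. \<not> |X \<inter> Y| =o |T|"
    proof (cases "Ys = {}")
      case True
      then show ?thesis using that exists_subset[OF TL] unfolding subsets_of_size_def by blast
    next
      case False
      obtain g where g: "g ` L = Ys" using card_of_ordLeq2[OF False, THEN iffD2, OF ys] by blast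
      have gT: "\<forall>\<alpha>\<in>L. |g \<alpha>| \<le>o |T|"
        using g fam iso_le unfolding m_family_def subsets_of_size_def by blast
      define B where "B t = L - (\<Union>\<alpha>\<in>D t. g \<alpha>)" for t
      have Bc: "|\<Union>\<alpha>\<in>D t. g \<alpha>| <o |L|" if "t \<in> T" for t
      proof -
        have "D t \<subseteq> L" unfolding D_def by (rule underS_sub)
        then have "\<forall>\<alpha>\<in>D t. |g \<alpha>| \<le>o |T|" using gT by blast
        then show ?thesis by (rule union_small[OF assms(2) Dsmall[OF that] assms(3)])
      qed
      have "|T \<times> L| =o |L|" using card_of_Times_infinite[OF assms(1) _ TL] assms(2) by auto
      then obtain e where e: "bij_betw e (T \<times> L) L" using card_of_ordIso[THEN iffD2] by blast
      define P where "P t = (\<lambda>l. e (t,l)) ` L" for t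
      have PL: "|L| =o |P t|" if "t \<in> T" for t
      proof -
        have "inj_on (\<lambda>l. e (t,l)) L" using e that unfolding bij_betw_def inj_on_def by auto
        then have "bij_betw (\<lambda>l. e (t,l)) L (P t)" unfolding P_def bij_betw_def by blast
        then show ?thesis by (rule card_of_ordIsoI)
      qed
      have PB: "\<exists>y. y \<in> P t \<inter> B t" if "t \<in> T" for t
      proof (rule ccontr)
        assume "\<nexists>y. y \<in> P t \<inter> B t"
        moreover have "P t \<subseteq> L" using e that unfolding P_def bij_betw_def by blast
        ultimately have "P t \<subseteq> (\<Union>\<alpha>\<in>D t. g \<alpha>)" unfolding B_def by blast
        then have "|P t| <o |L|" by (rule ordLeq_ordLess_trans[OF card_of_mono1 Bc[OF that]])
        moreover have "|P t| =o |L|" by (rule ordIso_symmetric[OF PL[OF that]])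
        ultimately show False using not_ordLess_ordIso by blast
      qed
      define x where "x t = (SOME y. y \<in> P t \<inter> B t)" for t
      have x: "x t \<in> P t \<inter> B t" if "t \<in> T" for t
        unfolding x_def using PB[OF that] by (rule someI_ex)
      have xinj: "inj_on x T"
      proof (rule inj_onI)
        fix s t assume st: "s \<in> T" "t \<in> T" "x s = x t"
        obtain l where l: "l \<in> L" "x s = e (s,l)" using x[OF st(1)] unfolding P_def by blast
        obtain l' where l': "l' \<in> L" "x t = e (t,l')" using x[OF st(2)] unfolding P_def by blast
        have "(s,l) = (t,l')" using e st l l' unfolding bij_betw_def inj_on_def by auto
        then show "s = t" by simp
      qed
      have XL: "x ` T \<subseteq> L" using x unfolding B_def by blast
      have "bij_betw x T (x ` T)" using xinj unfolding bij_betw_def by blast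
      then have Xc: "|x ` T| =o |T|" by (rule ordIso_symmetric[OF card_of_ordIsoI])
      have "\<not> |x ` T \<inter> Y| =o |T|" if Y: "Y \<in> Ys" for Y
      proof -
        obtain \<alpha> where al: "\<alpha> \<in> L" "Y = g \<alpha>" using g Y by blast
        obtain t0 where t0: "t0 \<in> T" "\<forall>t\<in>T. t \<notin> under |T| t0 \<longrightarrow> \<alpha> \<in> D t"
          using Dbig[OF al(1)] by blast
        have "x ` T \<inter> Y \<subseteq> x ` (under |T| t0)"
        proof
          fix z assume z: "z \<in> x ` T \<inter> Y"
          then obtain t where t: "t \<in> T" "z = x t" by blast
          show "z \<in> x ` (under |T| t0)"
          proof (cases "t \<in> under |T| t0")
            case False
            then have "\<alpha> \<in> D t" using t0 t by blast
            then have "z \<notin> B t" using z al unfolding B_def by blast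
            then show ?thesis using x[OF t(1)] t by blast
          qed (use t in blast)
        qed
        then have "|x ` T \<inter> Y| \<le>o |x ` (under |T| t0)|" by (rule card_of_mono1)
        then have "|x ` T \<inter> Y| \<le>o |under |T| t0|" by (rule ordLeq_transitive[OF _ card_of_image])
        then have "|x ` T \<inter> Y| <o |T|" by (rule ordLeq_ordLess_trans[OF _ under_small[OF assms(2) t0(1)]])
        then show ?thesis using not_ordLess_ordIso by blast
      qed
      then show ?thesis using that[of "x ` T"] XL Xc unfolding subsets_of_size_def by blast
    qed
    then show False using fam unfolding m_family_def by blast
  qed
qed

lemma lemW:
  assumes "infinite N" "|N| <o |A|" "\<not> regularCard |A|"
  shows "\<exists>a\<in>A. \<forall>x\<in>A. |underS |A| x| \<le>o |N| \<longrightarrow> x \<in> underS |A| a"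
proof -
  have CN: "Cinfinite |N|" using assms(1) by (simp add: cinfinite_def Field_card_of card_of_card_order_on)
  have le: "cardSuc |N| \<le>o |A|"
    using cardSuc_ordLess_ordLeq[OF card_of_Card_order card_of_Card_order, THEN iffD1, OF assms(2)] .
  have "\<not> cardSuc |N| =o |A|"
  proof
    assume "cardSuc |N| =o |A|"
    from regularCard_ordIso[OF this Cinfinite_cardSuc[OF CN] regularCard_cardSuc[OF CN]] assms(3)
    show False by simp
  qed
  then have lt: "cardSuc |N| <o |A|" using le by (simp add: ordLeq_iff_ordLess_or_ordIso)
  obtain a where a: "a \<in> A" "cardSuc |N| =o Restr |A| (underS |A| a)"
    using ordLess_iff_ordIso_Restr[OF card_of_Well_order cardSuc_Well_order[OF card_of_Card_order], THEN iffD1, OF lt]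
    by (auto simp: Field_card_of)
  have "Field (Restr |A| (underS |A| a)) = underS |A| a"
    by (rule Field_Restr_ofilter[OF card_of_Well_order wo_rel.underS_ofilter[OF cwo_wo]])
  then have i1: "|Field (cardSuc |N| )| =o |underS |A| a|" using card_of_cong[OF a(2)] by simp
  have i2: "|Field (cardSuc |N| )| =o cardSuc |N|"
    by (rule card_of_Field_ordIso[OF cardSuc_Card_order[OF card_of_Card_order]])
  have i3: "|N| <o cardSuc |N|" by (rule cardSuc_greater[OF card_of_Card_order])
  have "cardSuc |N| =o |underS |A| a|" by (rule ordIso_transitive[OF ordIso_symmetric[OF i2] i1])
  then have big: "|N| <o |underS |A| a|" by (rule ordLess_ordIso_trans[OF i3])
  have "x \<in> underS |A| a" if x: "x \<in> A" "|underS |A| x| \<le>o |N|" for x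
  proof (rule ccontr)
    assume nx: "x \<notin> underS |A| a"
    have "x \<noteq> a"
    proof
      assume "x = a"
      then have "|underS |A| a| \<le>o |N|" using x(2) by simp
      then show False using big not_ordLess_ordLeq by blast
    qed
    then have "(x,a) \<notin> |A|" using nx unfolding underS_def by blast
    then have "(a,x) \<in> |A|" using cwo_total[OF x(1) a(1)] by blast
    then have "underS |A| a \<subseteq> underS |A| x" by (rule underS_mono)
    then have "|underS |A| a| \<le>o |underS |A| x|" by (rule card_of_mono1)
    then have "|underS |A| a| \<le>o |N|" by (rule ordLeq_transitive[OF _ x(2)])
    then show False using big not_ordLess_ordLeq by blast
  qed
  then show ?thesis using a(1) by blast
qed

lemma singular_cover:
  assumes T: "infinite T" and bp: "below_plus_theta T L" and AL: "A \<subseteq> L"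
    and TA: "|T| <o |A|" and sing: "\<not> regularCard |A|"
  shows "\<exists>K. K \<subseteq> A \<and> |K| <o |T| \<and> (\<forall>x\<in>A. \<exists>k\<in>K. x \<in> underS |A| k)"
proof -
  define A0 where "A0 = {a\<in>A. |T| \<le>o |underS |A| a|}"
  define rep where "rep a = (SOME b. b \<in> A0 \<and> |underS |A| b| =o |underS |A| a| )" for a
  have rep: "rep a \<in> A0 \<and> |underS |A| (rep a)| =o |underS |A| a|" if "a \<in> A0" for a
  proof -
    have "|underS |A| a| =o |underS |A| a|" by (rule card_of_refl)
    then have "\<exists>b. b \<in> A0 \<and> |underS |A| b| =o |underS |A| a|" using that by blast
    then show ?thesis unfolding rep_def by (rule someI_ex)
  qed
  define R where "R = rep ` A0"
  have Rdist: "\<not> |underS |A| u| =o |underS |A| v|" if uv: "u \<in> R" "v \<in> R" "u \<noteq> v" for u v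
  proof
    assume iso: "|underS |A| u| =o |underS |A| v|"
    obtain a where a: "a \<in> A0" "u = rep a" using uv(1) R_def by blast
    obtain b where b: "b \<in> A0" "v = rep b" using uv(2) R_def by blast
    have ra: "|underS |A| (rep a)| =o |underS |A| a|" using rep[OF a(1)] by blast
    have rb: "|underS |A| (rep b)| =o |underS |A| b|" using rep[OF b(1)] by blast
    have iso': "|underS |A| (rep a)| =o |underS |A| (rep b)|" using iso a b by simp
    have ab: "|underS |A| a| =o |underS |A| b|"
      by (rule ordIso_transitive[OF ordIso_transitive[OF ordIso_symmetric[OF ra] iso'] rb])
    have "|underS |A| c| =o |underS |A| a| \<longleftrightarrow> |underS |A| c| =o |underS |A| b|" for c
    proof
      assume "|underS |A| c| =o |underS |A| a|"
      then show "|underS |A| c| =o |underS |A| b|" by (rule ordIso_transitive[OF _ ab])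
    next
      assume "|underS |A| c| =o |underS |A| b|"
      then show "|underS |A| c| =o |underS |A| a|" by (rule ordIso_transitive[OF _ ordIso_symmetric[OF ab]])
    qed
    then have "(\<lambda>c. c \<in> A0 \<and> |underS |A| c| =o |underS |A| a| ) = (\<lambda>c. c \<in> A0 \<and> |underS |A| c| =o |underS |A| b| )"
      by simp
    then have "rep a = rep b" unfolding rep_def by simp
    then show False using a b uv(3) by simp
  qed
  have RT: "|R| <o |T|"
  proof (rule ccontr)
    assume "\<not> |R| <o |T|"
    then have "|T| \<le>o |R|" by (rule nless_le)
    then obtain j where j: "inj_on j T" "j ` T \<subseteq> R" using card_of_ordLeq[THEN iffD2] by blast
    have RA0: "R \<subseteq> A0" using rep unfolding R_def by blast
    have c1: "\<forall>t \<in> T. underS |A| (j t) \<subseteq> L \<and> |T| \<le>o |underS |A| (j t)| \<and> |underS |A| (j t)| <o |L|"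
    proof
      fix t assume t: "t \<in> T"
      then have jt: "j t \<in> A0" using j RA0 by blast
      then have "j t \<in> A" using A0_def by blast
      then have "|underS |A| (j t)| <o |A|" by (rule underS_small)
      moreover have "|A| \<le>o |L|" by (rule card_of_mono1[OF AL])
      ultimately have "|underS |A| (j t)| <o |L|" by (rule ordLess_ordLeq_trans)
      moreover have "underS |A| (j t) \<subseteq> L" by (rule subset_trans[OF underS_sub AL])
      moreover have "|T| \<le>o |underS |A| (j t)|" using jt A0_def by blast
      ultimately show "underS |A| (j t) \<subseteq> L \<and> |T| \<le>o |underS |A| (j t)| \<and> |underS |A| (j t)| <o |L|"
        by blast
    qed
    have c2: "\<forall>s\<in>T. \<forall>t\<in>T. s \<noteq> t \<longrightarrow> \<not> |underS |A| (j s)| =o |underS |A| (j t)|"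
      using Rdist j unfolding inj_on_def by blast
    have "\<exists>Af. (\<forall>t\<in>T. Af t \<subseteq> L \<and> |T| \<le>o |Af t| \<and> |Af t| <o |L| ) \<and>
      (\<forall>s\<in>T. \<forall>t\<in>T. s \<noteq> t \<longrightarrow> \<not> ( |Af s| =o |Af t| ))"
      apply (rule exI[of _ "\<lambda>t. underS |A| (j t)"])
      using c1 c2 by blast
    then show False using bp unfolding below_plus_theta_def by blast
  qed
  have "\<exists>a\<in>A. \<forall>x\<in>A. |underS |A| x| \<le>o |T| \<longrightarrow> x \<in> underS |A| a"
    by (rule lemW[OF T TA sing])
  then obtain aT where aT: "aT \<in> A" "\<forall>x\<in>A. |underS |A| x| \<le>o |T| \<longrightarrow> x \<in> underS |A| aT" by blast
  define aN where "aN k = (SOME a. a\<in>A \<and> (\<forall>x\<in>A. |underS |A| x| \<le>o |underS |A| k| \<longrightarrow> x \<in> underS |A| a))" for k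
  have aN: "aN k \<in> A \<and> (\<forall>x\<in>A. |underS |A| x| \<le>o |underS |A| k| \<longrightarrow> x \<in> underS |A| (aN k))" if "k \<in> A0" for k
  proof -
    have kk: "|T| \<le>o |underS |A| k|" "k \<in> A" using that A0_def by blast+
    have "infinite (underS |A| k)"
    proof
      assume "finite (underS |A| k)"
      then have "finite T" by (rule card_of_ordLeq_finite[OF kk(1)])
      then show False using T by blast
    qed
    moreover have "|underS |A| k| <o |A|" by (rule underS_small[OF kk(2)])
    ultimately have "\<exists>a\<in>A. \<forall>x\<in>A. |underS |A| x| \<le>o |underS |A| k| \<longrightarrow> x \<in> underS |A| a"
      using sing by (rule lemW)
    then have "\<exists>a. a\<in>A \<and> (\<forall>x\<in>A. |underS |A| x| \<le>o |underS |A| k| \<longrightarrow> x \<in> underS |A| a)" by blast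
    then show ?thesis unfolding aN_def by (rule someI_ex)
  qed
  define K where "K = insert aT (aN ` R)"
  have RA0: "R \<subseteq> A0" using rep unfolding R_def by blast
  have "K \<subseteq> A" unfolding K_def using aT aN RA0 by blast
  moreover have "|K| <o |T|" unfolding K_def
    by (rule insert_small[OF T ordLeq_ordLess_trans[OF card_of_image RT]])
  moreover have "\<exists>k\<in>K. x \<in> underS |A| k" if x: "x \<in> A" for x
  proof (cases "|underS |A| x| \<le>o |T|")
    case True
    then show ?thesis using aT x K_def by blast
  next
    case False
    then have "|T| \<le>o |underS |A| x|" using ordLess_imp_ordLeq[OF nle_less] by blast
    then have xA0: "x \<in> A0" using x A0_def by blast
    then have "rep x \<in> R" using R_def by blast
    moreover have "|underS |A| x| \<le>o |underS |A| (rep x)|"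
      using rep[OF xA0] iso_ge by blast
    ultimately
    show ?thesis using aN RA0 x K_def by blast
  qed
  ultimately show ?thesis by blast
qed

lemma main3:
  assumes T: "infinite T" and reg: "regularCard |T|" and bp: "below_plus_theta T L"
  shows "A \<subseteq> L \<Longrightarrow> |T| \<le>o |A| \<Longrightarrow> \<exists>F. m_family T A F \<and> |F| \<le>o |A|"
proof (induction A rule: wf_induct[OF wf_inv_image[OF wf_ordLess, of card_of]])
  case (1 A)
  have IH: "\<And>B. |B| <o |A| \<Longrightarrow> B \<subseteq> L \<Longrightarrow> |T| \<le>o |B| \<Longrightarrow> \<exists>F. m_family T B F \<and> |F| \<le>o |B|"
    using 1(1) by auto
  have AL: "A \<subseteq> L" and TA: "|T| \<le>o |A|" using 1 by auto
  have Ainf: "infinite A" using T TA card_of_ordLeq_finite by blast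
  show ?case
  proof (cases "|T| =o |A|")
    case True
    have AT: "|A| =o |T|" by (rule ordIso_symmetric[OF True])
    have "m_family T A {A}"
      unfolding m_family_def subsets_of_size_def using AT
      by (auto simp: Int_absorb2)
    moreover have "|{A}| \<le>o |A|" using card_of_singl_ordLeq Ainf by (metis finite.emptyI)
    ultimately show ?thesis by blast
  next
    case False
    then have TA': "|T| <o |A|" using TA by (simp add: ordLeq_iff_ordLess_or_ordIso)
    define U where "U a = under |A| a" for a
    have Usmall: "|U a| <o |A|" if "a \<in> A" for a unfolding U_def by (rule under_small[OF Ainf that])
    have UA: "U a \<subseteq> A" for a unfolding U_def by (rule under_sub)
    define F where "F a = (if |T| \<le>o |U a| then (SOME F. m_family T (U a) F \<and> |F| \<le>o |U a| ) else {})" for a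
    have F: "m_family T (U a) (F a) \<and> |F a| \<le>o |U a|" if "a \<in> A" "|T| \<le>o |U a|" for a
    proof -
      have "\<exists>F. m_family T (U a) F \<and> |F| \<le>o |U a|"
        by (rule IH[OF Usmall[OF that(1)] subset_trans[OF UA AL] that(2)])
      then have "m_family T (U a) (SOME F. m_family T (U a) F \<and> |F| \<le>o |U a| ) \<and>
          |SOME F. m_family T (U a) F \<and> |F| \<le>o |U a| | \<le>o |U a|" by (rule someI_ex)
      then show ?thesis unfolding F_def using that(2) by simp
    qed
    have Fs: "|F a| \<le>o |A|" if "a \<in> A" for a
    proof (cases "|T| \<le>o |U a|")
      case True
      then show ?thesis using ordLeq_transitive[OF conjunct2[OF F[OF that True]] ordLess_imp_ordLeq[OF Usmall[OF that]]] by blast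
    next
      case False
      then show ?thesis unfolding F_def using card_of_empty by simp
    qed
    define FF where "FF = (\<Union>a\<in>A. F a)"
    have "|FF| \<le>o |A|" unfolding FF_def
      by (rule card_of_UNION_ordLeq_infinite[OF Ainf ordLeq_reflexive[OF card_of_Well_order]]) (use Fs in blast)
    moreover have FFsub: "FF \<subseteq> subsets_of_size T A"
    proof
      fix Y assume "Y \<in> FF"
      then obtain a where a: "a \<in> A" "Y \<in> F a" unfolding FF_def by blast
      then have "|T| \<le>o |U a|" unfolding F_def by (auto split: if_splits)
      then have "Y \<in> subsets_of_size T (U a)" using F[OF a(1)] a(2) unfolding m_family_def by blast
      then show "Y \<in> subsets_of_size T A" using UA unfolding subsets_of_size_def by blast
    qed
    have cover: "\<exists>Y\<in>FF. |X \<inter> Y| =o |T|"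
      if X: "X \<in> subsets_of_size T A" and a: "a \<in> A" "|T| \<le>o |X \<inter> U a|" for X a
    proof -
      have XT: "|X| =o |T|" using X unfolding subsets_of_size_def by blast
      have TU: "|T| \<le>o |U a|" by (rule ordLeq_transitive[OF a(2) card_of_mono1]) blast
      have "|X \<inter> U a| \<le>o |T|" by (rule ordLeq_ordIso_trans[OF card_of_mono1 XT]) blast
      then have "|X \<inter> U a| =o |T|" using a(2) by (simp add: ordIso_iff_ordLeq)
      then have "X \<inter> U a \<in> subsets_of_size T (U a)" unfolding subsets_of_size_def by blast
      then obtain Y where Y: "Y \<in> F a" "|X \<inter> U a \<inter> Y| =o |T|"
        using F[OF a(1) TU] unfolding m_family_def by blast
      have "|T| \<le>o |X \<inter> Y|" by (rule ordLeq_transitive[OF iso_ge[OF Y(2)] card_of_mono1]) blast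
      moreover have "|X \<inter> Y| \<le>o |T|" by (rule ordLeq_ordIso_trans[OF card_of_mono1 XT]) blast
      ultimately have "|X \<inter> Y| =o |T|" by (simp add: ordIso_iff_ordLeq)
      then show ?thesis using Y(1) a(1) FF_def by blast
    qed
    have "\<exists>a\<in>A. |T| \<le>o |X \<inter> U a|" if X: "X \<in> subsets_of_size T A" for X
    proof (cases "regularCard |A|")
      case True
      have XA: "X \<subseteq> A" "|X| =o |T|" using X unfolding subsets_of_size_def by auto
      have "\<not> |X| =o |A|"
      proof
        assume "|X| =o |A|"
        then have "|T| =o |A|" by (rule ordIso_transitive[OF ordIso_symmetric[OF XA(2)]])
        then show False using TA' not_ordLess_ordIso by blast
      qed
      then have "\<not> cofinal X |A|" using True XA(1) unfolding regularCard_def Field_card_of by blast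
      then obtain a where "a \<in> A" "\<forall>b\<in>X. (b,a) \<in> |A|" using not_cofinal_bound XA(1) by blast
      then have "X \<inter> U a = X" "a \<in> A" unfolding U_def under_def by auto
      then show ?thesis using iso_ge[OF XA(2)] by metis
    next
      case False
      obtain K where K: "K \<subseteq> A" "|K| <o |T|" "\<forall>x\<in>A. \<exists>k\<in>K. x \<in> underS |A| k"
        using singular_cover[OF T bp AL TA' False] by blast
      have XA: "X \<subseteq> A" "|X| =o |T|" using X unfolding subsets_of_size_def by auto
      have "X = (\<Union>k\<in>K. X \<inter> U k)" using K(3) XA(1) unfolding U_def under_def underS_def by blast
      show ?thesis
      proof (rule ccontr)
        assume "\<not> (\<exists>a\<in>A. |T| \<le>o |X \<inter> U a| )"
        then have kk: "\<forall>k\<in>K. |X \<inter> U k| <o |T|" using K(1) nle_less by blast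
        have CT: "Cinfinite |T|" using T by (simp add: cinfinite_def Field_card_of card_of_card_order_on)
        have "|\<Union>k\<in>K. X \<inter> U k| <o |T|"
          by (rule card_of_UNION_ordLess_infinite_Field_regularCard[OF reg CT K(2) kk])
        then have "|X| <o |T|" using \<open>X = (\<Union>k\<in>K. X \<inter> U k)\<close> by simp
        then show False using XA(2) not_ordLess_ordIso by blast
      qed
    qed
    then have "m_family T A FF" unfolding m_family_def using FFsub cover by blast
    ultimately show ?thesis by blast
  qed
qed

theorem proposition2p2:
  fixes T :: "'b set" and L :: "'a set"
  assumes "infinite L"
    and "infinite T" and "regularCard (card_of T)"
  shows "(cf_is T L \<and> card_of T <o card_of L \<longrightarrow> m_greater T L L)
       \<and> (card_of T <o card_of L \<longrightarrow> m_geq T L L)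
       \<and> (card_of T <o card_of L \<and> below_plus_theta T L \<longrightarrow> m_geq T L L \<and> m_leq T L L)"
proof (intro conjI impI)
  show "m_greater T L L" if "cf_is T L \<and> |T| <o |L|" using part1 assms that by blast
  show "m_geq T L L" if "|T| <o |L|" using part2 assms that by blast
  show "m_geq T L L" if "|T| <o |L| \<and> below_plus_theta T L" using part2 assms that by blast
  show "m_leq T L L" if "|T| <o |L| \<and> below_plus_theta T L"
    using main3[of T L L] assms that ordLess_imp_ordLeq unfolding m_leq_def by blast
qed

end
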